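(* Let $a_1,\dots,a_p>0$ be pairwise distinct, $\vec n\in\mathbb N_0^p$, and $i$ with $n_i\ge1$. The type I multiple Charlier polynomials are $$C^{(i)}_{\vec n}(x;\vec a)=\frac{(-1)^{n_i-1}e^{-a_i}}{(n_i-1)!\prod_{q\ne i}(a_i-a_q)^{n_q}}\sum_{\ell_1,\dots,\ell_p\ge0}(-n_i+1)_{L}\,(-x)_{\ell_i}\frac{(-1/a_i)^{\ell_i}}{\ell_i!}\prod_{q\ne i}\frac{(n_q)_{\ell_q}}{\ell_q!}\Big(\frac1{a_q-a_i}\Big)^{\ell_q},$$ with $L=\ell_1+\cdots+\ell_p$ (finite sum since $(-n_i+1)_L=0$ for $L\ge n_i$).
   Context: Charlier weights $w_i(x)=a_i^x/\Gamma(x+1)$ on $\mathbb N_0$. Type I polynomials $C^{(i)}_{\vec n}$: $\deg\le n_i-1$ (zero if $n_i=0$), $\sum_i\sum_{k\ge0}k^jC^{(i)}_{\vec n}(k)w_i(k)=0$ for $0\le j\le|\vec n|-2$, $=1$ for $j=|\vec n|-1$. $(a)_m$ Pochhammer symbol. *)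

theory Defs
  imports "HOL-Analysis.Analysis" "HOL-Computational_Algebra.Polynomial"
begin

text \<open>Indices are 0..p-1. Charlier weight w_i(k) = a_i^k / Gamma(k+1) = a_i^k / k!.\<close>
definition charlier_w :: "(nat \<Rightarrow> real) \<Rightarrow> nat \<Rightarrow> nat \<Rightarrow> real" where
  "charlier_w a i k = a i ^ k / fact k"

definition is_typeI_charlier ::
  "nat \<Rightarrow> (nat \<Rightarrow> real) \<Rightarrow> (nat \<Rightarrow> nat) \<Rightarrow> (nat \<Rightarrow> real poly) \<Rightarrow> bool" where
  "is_typeI_charlier p a n C \<longleftrightarrow>
     (\<forall>i<p. (n i = 0 \<longrightarrow> C i = 0) \<and> (n i \<ge> 1 \<longrightarrow> degree (C i) \<le> n i - 1)) \<and>
     (\<forall>j::nat. j + 2 \<le> (\<Sum>q<p. n q) \<longrightarrow>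
        (\<Sum>i<p. \<Sum>k. real k ^ j * poly (C i) (real k) * charlier_w a i k) = 0) \<and>
     (\<forall>j::nat. j + 1 = (\<Sum>q<p. n q) \<longrightarrow>
        (\<Sum>i<p. \<Sum>k. real k ^ j * poly (C i) (real k) * charlier_w a i k) = 1)"

text \<open>Explicit formula; the sum over l_1..l_p \<ge> 0 is restricted to L = l_1+...+l_p < n_i,
  the remaining terms vanish since the factor pochhammer (1 - n_i) L is 0 there.\<close>
definition charlier_formula ::
  "nat \<Rightarrow> (nat \<Rightarrow> real) \<Rightarrow> (nat \<Rightarrow> nat) \<Rightarrow> nat \<Rightarrow> real \<Rightarrow> real" where
  "charlier_formula p a n i x =
     (-1) ^ (n i - 1) * exp (- a i) /
       (fact (n i - 1) * (\<Prod>q\<in>{..<p} - {i}. (a i - a q) ^ n q)) *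
     (\<Sum>l\<in>{l::nat \<Rightarrow> nat. (\<forall>q. p \<le> q \<longrightarrow> l q = 0) \<and> (\<Sum>q<p. l q) < n i}.
        pochhammer (1 - real (n i)) (\<Sum>q<p. l q) * pochhammer (- x) (l i) *
        (-1 / a i) ^ l i / fact (l i) *
        (\<Prod>q\<in>{..<p} - {i}. pochhammer (real (n q)) (l q) / fact (l q) *
            (1 / (a q - a i)) ^ l q))"

end

theory Submission
  imports Defs "HOL-Computational_Algebra.Polynomial_Factorial" "HOL-Computational_Algebra.Polynomial_FPS" "HOL-Computational_Algebra.Field_as_Ring"
begin

no_notation vec_nth (infixl \<open>$\<close> 90)
notation fps_nth (infixl \<open>$\<close> 75)

lemma summ_pow: "summable (\<lambda>k. real k ^ j * x ^ k / fact k)"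
proof (rule summable_comparison_test')
  show "summable (\<lambda>k. inverse (fact k) * (2^j * \<bar>x\<bar>) ^ k)" by (rule summable_exp)
  fix k :: nat assume "k \<ge> 0"
  have k2: "real k ^ j \<le> (2^j) ^ k"
  proof -
    have "real k ^ j \<le> (2^k) ^ j" by (rule power_mono) (use less_exp[of k] in \<open>auto simp: of_nat_less_iff[symmetric]\<close>)
    also have "\<dots> = (2^j)^k" by (simp add: power_mult[symmetric] mult.commute)
    finally show ?thesis .
  qed
  have "norm (real k ^ j * x ^ k / fact k) = real k ^ j * \<bar>x\<bar> ^ k / fact k"
    by (simp add: abs_mult power_abs)
  also have "\<dots> \<le> (2^j)^k * \<bar>x\<bar> ^ k / fact k"
    by (intro divide_right_mono mult_right_mono k2) auto
  also have "\<dots> = inverse (fact k) * (2^j * \<bar>x\<bar>) ^ k" by (simp add: power_mult_distrib field_simps)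
  finally show "norm (real k ^ j * x ^ k / fact k) \<le> inverse (fact k) * (2^j * \<bar>x\<bar>) ^ k" .
qed

lemma summ_poly: "summable (\<lambda>k. poly Q (real k) * x ^ k / fact k)"
proof -
  have "(\<lambda>k. poly Q (real k) * x ^ k / fact k) = (\<lambda>k. \<Sum>i\<le>degree Q. coeff Q i * (real k ^ i * x ^ k / fact k))"
    by (simp add: poly_altdef sum_distrib_right sum_divide_distrib mult.assoc)
  moreover have "summable (\<lambda>k. \<Sum>i\<le>degree Q. coeff Q i * (real k ^ i * x ^ k / fact k))"
    by (intro summable_sum summable_mult summ_pow)
  ultimately show ?thesis by simp
qed

lemma summ_w: "summable (\<lambda>k. poly Q (real k) * charlier_w a i k)"
  using summ_poly[of Q "a i"] by (simp add: charlier_w_def mult.assoc)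

lemma key_fact: "real (Suc k) * (x ^ Suc k / fact (Suc k)) = x * (x^k / fact k)" for x :: real
proof -
  have "fact (Suc k) = real (Suc k) * fact k" by (simp only: fact_Suc)
  moreover have "real (Suc k) \<noteq> 0" "(fact k::real) \<noteq> 0" by auto
  ultimately show ?thesis by (simp del: of_nat_Suc fact_Suc add: field_simps)
qed

definition lam :: "nat \<Rightarrow> (nat\<Rightarrow>real) \<Rightarrow> (nat \<Rightarrow> real poly) \<Rightarrow> real poly \<Rightarrow> real" where
 "lam p a C \<pi> = (\<Sum>i<p. \<Sum>k. poly \<pi> (real k) * poly (C i) (real k) * charlier_w a i k)"

definition bnd :: "real poly \<Rightarrow> nat \<Rightarrow> bool" where
 "bnd D m \<longleftrightarrow> (\<forall>j\<ge>m. coeff D j = 0)"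

lemma summ_w2: "summable (\<lambda>k. poly \<pi> (real k) * poly D (real k) * charlier_w a i k)"
  using summ_w[of "\<pi> * D" a i] by (simp add: mult.assoc)

lemma lam_lin: "lam p a C \<pi> = (\<Sum>j\<le>degree \<pi>. coeff \<pi> j * lam p a C (monom 1 j))"
proof -
  have "\<And>i. (\<Sum>k. poly \<pi> (real k) * poly (C i) (real k) * charlier_w a i k)
     = (\<Sum>j\<le>degree \<pi>. coeff \<pi> j * (\<Sum>k. poly (monom 1 j) (real k) * poly (C i) (real k) * charlier_w a i k))"
  proof -
    fix i
    have "(\<Sum>k. poly \<pi> (real k) * poly (C i) (real k) * charlier_w a i k)
       = (\<Sum>k. \<Sum>j\<le>degree \<pi>. coeff \<pi> j * (poly (monom 1 j) (real k) * poly (C i) (real k) * charlier_w a i k))"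
      by (simp add: poly_altdef[of \<pi>] sum_distrib_right poly_monom mult.assoc)
    also have "\<dots> = (\<Sum>j\<le>degree \<pi>. \<Sum>k. coeff \<pi> j * (poly (monom 1 j) (real k) * poly (C i) (real k) * charlier_w a i k))"
      by (rule suminf_sum) (intro summable_mult summ_w2)
    also have "\<dots> = (\<Sum>j\<le>degree \<pi>. coeff \<pi> j * (\<Sum>k. poly (monom 1 j) (real k) * poly (C i) (real k) * charlier_w a i k))"
      by (intro sum.cong refl suminf_mult summ_w2)
    finally show "?thesis i" .
  qed
  then show ?thesis unfolding lam_def by (simp add: sum_distrib_left sum.swap[of _ "{..<p}"])
qed

lemma lam_diff: "lam p a (\<lambda>i. C i - C' i) \<pi> = lam p a C \<pi> - lam p a C' \<pi>"
  unfolding lam_def sum_subtractf[symmetric]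
proof (intro sum.cong refl)
  fix i
  show "(\<Sum>k. poly \<pi> (real k) * poly (C i - C' i) (real k) * charlier_w a i k) =
    (\<Sum>k. poly \<pi> (real k) * poly (C i) (real k) * charlier_w a i k) -
    (\<Sum>k. poly \<pi> (real k) * poly (C' i) (real k) * charlier_w a i k)"
    by (subst suminf_diff[OF summ_w2 summ_w2]) (simp add: algebra_simps)
qed

lemma poly_periodic_const:
  fixes D :: "real poly"
  assumes "pcompose D [:1,1:] = D"
  shows "D = [:poly D 0:]"
proof -
  have per: "poly D (x+1) = poly D x" for x
    using arg_cong[OF assms, of "\<lambda>q. poly q x"] by (simp add: poly_pcompose add.commute)
  have "poly D (real k) = poly D 0" for k
  proof (induction k)
    case (Suc k) then show ?case using per[of "real k"] by (simp add: add.commute)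
  qed simp
  hence sub: "range real \<subseteq> {x. poly (D - [:poly D 0:]) x = 0}" by auto
  have "infinite (range real)" using infinite_UNIV_nat inj_of_nat by (metis finite_imageD inj_def of_nat_eq_iff)
  hence "D - [:poly D 0:] = 0" using poly_roots_finite finite_subset[OF sub] by blast
  thus ?thesis by simp
qed

lemma bnd_zero: "bnd D 0 \<Longrightarrow> D = 0"
  unfolding bnd_def by (intro poly_eqI) simp

lemma bnd_degree: "bnd D m \<Longrightarrow> D \<noteq> 0 \<Longrightarrow> degree D < m"
  unfolding bnd_def by (metis leading_coeff_0_iff not_le)

lemma degree_bnd: "degree D < m \<Longrightarrow> bnd D m"
  unfolding bnd_def by (simp add: coeff_eq_0)

lemma exp_sum: "(\<Sum>k. x ^ k / fact k) = exp (x::real)"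
  using exp_converges[of x] by (simp add: sums_iff divide_inverse mult.commute scaleR_conv_of_real)

definition psi :: "real \<Rightarrow> real poly \<Rightarrow> real poly" where
  "psi b \<pi> = [:0,1:] * pcompose \<pi> [:-1,1:] - smult b \<pi>"

lemma degree_psi: "degree (psi b \<pi>) \<le> degree \<pi> + 1"
proof -
  have "degree ([:0,1:] * pcompose \<pi> [:-1,1:]) \<le> degree \<pi> + 1"
    by (rule order.trans[OF degree_mult_le]) (simp add: degree_pcompose)
  moreover have "degree (smult b \<pi>) \<le> degree \<pi> + 1"
    using degree_smult_le[of b \<pi>] by linarith
  ultimately show ?thesis unfolding psi_def
    by (intro degree_diff_le)
qed

lemma shift_i:
  "(\<Sum>k. poly \<pi> (real k) * poly (smult (a i) (pcompose D [:1,1:]) - smult b D) (real k) * charlier_w a i k)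
   = (\<Sum>k. poly (psi b \<pi>) (real k) * poly D (real k) * charlier_w a i k)"
proof -
  define g where "g k = poly ([:0,1:] * pcompose \<pi> [:-1,1:]) (real k) * poly D (real k) * charlier_w a i k" for k
  have gs: "summable g" unfolding g_def by (rule summ_w2)
  have eq1: "(\<lambda>k. poly \<pi> (real k) * (a i * poly D (real k + 1)) * charlier_w a i k) = (\<lambda>k. g (Suc k))"
  proof
    fix k
    show "poly \<pi> (real k) * (a i * poly D (real k + 1)) * charlier_w a i k = g (Suc k)"
    proof -
      have "g (Suc k) = poly \<pi> (real k) * poly D (real k + 1) * (real (Suc k) * (a i ^ Suc k / fact (Suc k)))"
      proof -
        have r: "real (Suc k) = real k + 1" by simp
        show ?thesis unfolding g_def charlier_w_def r[symmetric] by (simp add: poly_pcompose r del: of_nat_Suc fact_Suc power_Suc)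
      qed
      also have "\<dots> = poly \<pi> (real k) * (a i * poly D (real k + 1)) * charlier_w a i k"
        unfolding key_fact charlier_w_def by simp
      finally show ?thesis by simp
    qed
  qed
  have g0: "g 0 = 0" by (simp add: g_def)
  have "(\<Sum>k. poly \<pi> (real k) * poly (smult (a i) (pcompose D [:1,1:]) - smult b D) (real k) * charlier_w a i k)
    = (\<Sum>k. poly \<pi> (real k) * (a i * poly D (real k + 1)) * charlier_w a i k - b * (poly \<pi> (real k) * poly D (real k) * charlier_w a i k))"
    by (simp add: poly_pcompose algebra_simps)
  also have "\<dots> = (\<Sum>k. poly \<pi> (real k) * (a i * poly D (real k + 1)) * charlier_w a i k) - (\<Sum>k. b * (poly \<pi> (real k) * poly D (real k) * charlier_w a i k))"
    by (rule suminf_diff[symmetric]) (use gs summ_w2 in \<open>auto simp: eq1 summable_Suc_iff intro: summable_mult\<close>)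
  also have "\<dots> = suminf g - (\<Sum>k. b * (poly \<pi> (real k) * poly D (real k) * charlier_w a i k))"
    by (simp add: eq1 suminf_split_head[OF gs] g0)
  also have "\<dots> = (\<Sum>k. g k - b * (poly \<pi> (real k) * poly D (real k) * charlier_w a i k))"
    by (rule suminf_diff) (use gs summ_w2 in \<open>auto intro: summable_mult\<close>)
  also have "\<dots> = (\<Sum>k. poly (psi b \<pi>) (real k) * poly D (real k) * charlier_w a i k)"
    by (simp add: g_def psi_def algebra_simps)
  finally show ?thesis .
qed

lemma lam_shift:
  "lam p a (\<lambda>i. smult (a i) (pcompose (D i) [:1,1:]) - smult b (D i)) \<pi> = lam p a D (psi b \<pi>)"
  unfolding lam_def by (intro sum.cong refl shift_i)

lemma uniq_aux:
  assumes pos: "\<forall>q<p. a q > 0" and inj: "inj_on a {..<p}"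
  shows "(\<Sum>q<p. n q) = N \<Longrightarrow> (\<forall>i<p. bnd (D i) (n i)) \<Longrightarrow>
     (\<forall>\<pi>. degree \<pi> < N \<longrightarrow> lam p a D \<pi> = 0) \<Longrightarrow> \<forall>i<p. D i = 0"
proof (induction N arbitrary: n D)
  case 0
  then show ?case by (auto intro: bnd_zero)
next
  case (Suc N)
  have "\<exists>i0<p. n i0 \<ge> 1"
  proof (rule ccontr)
    assume "\<not> (\<exists>i0<p. n i0 \<ge> 1)"
    hence "(\<Sum>q<p. n q) = 0" by (intro sum.neutral) auto
    thus False using Suc.prems(1) by simp
  qed
  then obtain i0 where i0: "i0 < p" "n i0 \<ge> 1" by blast
  define n' where "n' = n(i0 := n i0 - 1)"
  define D' where "D' i = smult (a i) (pcompose (D i) [:1,1:]) - smult (a i0) (D i)" for i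
  have sumn: "(\<Sum>q<p. n q) = n i0 + (\<Sum>q\<in>{..<p}-{i0}. n q)"
    using i0 by (simp add: sum.remove)
  have sumn': "(\<Sum>q<p. n' q) = n' i0 + (\<Sum>q\<in>{..<p}-{i0}. n' q)"
    using i0 by (simp add: sum.remove)
  have "(\<Sum>q\<in>{..<p}-{i0}. n' q) = (\<Sum>q\<in>{..<p}-{i0}. n q)"
    by (intro sum.cong) (auto simp: n'_def)
  hence Nn': "(\<Sum>q<p. n' q) = N" using sumn sumn' Suc.prems(1) i0 by (simp add: n'_def)
  have bD': "\<forall>i<p. bnd (D' i) (n' i)"
  proof (intro allI impI)
    fix i assume ip: "i < p"
    have bi: "bnd (D i) (n i)" using Suc.prems(2) ip by auto
    have dD': "degree (D' i) \<le> degree (D i)"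
      unfolding D'_def by (intro order.trans[OF degree_diff_le]) (auto simp: degree_pcompose)
    show "bnd (D' i) (n' i)"
    proof (cases "i = i0")
      case False
      then have "n' i = n i" by (simp add: n'_def)
      thus ?thesis
      proof (cases "D i = 0")
        case True thus ?thesis using \<open>n' i = n i\<close> by (simp add: D'_def bnd_def)
      next
        case False
        then show ?thesis using bnd_degree[OF bi False] dD' \<open>n' i = n i\<close> degree_bnd by auto
      qed
    next
      case True
      show ?thesis
      proof (cases "degree (D i) = 0")
        case True
        then obtain c where "D i = [:c:]" by (meson degree_eq_zeroE)
        then have "D' i = 0" using \<open>i = i0\<close> by (simp add: D'_def)
        thus ?thesis by (simp add: bnd_def)
      next
        case False
        have Dn0: "D i \<noteq> 0" using False by auto
        have dlt: "degree (D i) < n i" using bnd_degree[OF bi Dn0] .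
        have "coeff (D' i) (degree (D i)) = 0"
        proof -
          have "coeff (pcompose (D i) [:1,1:]) (degree (D i)) = lead_coeff (D i)"
            using lead_coeff_comp[of "[:1,1:]" "D i"] by (simp add: degree_pcompose)
          thus ?thesis using \<open>i = i0\<close> by (simp add: D'_def)
        qed
        hence "degree (D' i) < degree (D i) \<or> D' i = 0"
          using dD' by (metis le_neq_implies_less leading_coeff_0_iff)
        thus ?thesis using dlt \<open>i = i0\<close> degree_bnd[of "D' i" "n' i"] by (auto simp: n'_def bnd_def)
      qed
    qed
  qed
  have lamD': "\<forall>\<pi>. degree \<pi> < N \<longrightarrow> lam p a D' \<pi> = 0"
  proof (intro allI impI)
    fix \<pi> :: "real poly" assume "degree \<pi> < N"
    hence "degree (psi (a i0) \<pi>) < Suc N" using degree_psi[of "a i0" \<pi>] by linarith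
    hence "lam p a D (psi (a i0) \<pi>) = 0" using Suc.prems(3) by auto
    thus "lam p a D' \<pi> = 0" unfolding D'_def using lam_shift by metis
  qed
  have D'0: "\<forall>i<p. D' i = 0" using Suc.IH[OF Nn' bD' lamD'] .
  have others: "D i = 0" if "i < p" "i \<noteq> i0" for i
  proof (rule ccontr)
    assume Dn0: "D i \<noteq> 0"
    have eq: "smult (a i) (pcompose (D i) [:1,1:]) = smult (a i0) (D i)"
      using D'0 that by (simp add: D'_def)
    have "a i * lead_coeff (D i) = a i0 * lead_coeff (D i)"
    proof -
      have p1: "a i > 0" "a i0 > 0" using pos that i0 by auto
      show ?thesis
      using arg_cong[OF eq, of lead_coeff] lead_coeff_comp[of "[:1,1:]" "D i"] p1 by (simp add: degree_pcompose)
    qed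
    hence "a i = a i0" using Dn0 by simp
    thus False using inj that i0 by (meson inj_on_def lessThan_iff)
  qed
  have "smult (a i0) (pcompose (D i0) [:1,1:]) = smult (a i0) (D i0)"
    using D'0 i0 by (simp add: D'_def)
  moreover have "a i0 \<noteq> 0" using pos i0 by auto
  ultimately have "pcompose (D i0) [:1,1:] = D i0" using smult_cancel by blast
  hence Dc: "D i0 = [:poly (D i0) 0:]" by (rule poly_periodic_const)
  define c where "c = poly (D i0) 0"
  have "lam p a D 1 = 0" using Suc.prems(3) by auto
  moreover have "lam p a D 1 = (\<Sum>k. poly (D i0) (real k) * charlier_w a i0 k)"
    unfolding lam_def using i0 others by (subst sum.remove[of _ i0]) auto
  moreover have "\<dots> = c * exp (a i0)"
  proof -
    have pc: "poly (D i0) x = c" for x using Dc c_def by (metis poly_pCons poly_0 mult_zero_right add_0_right)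
    show ?thesis unfolding pc charlier_w_def
      using suminf_mult[OF summ_pow[of 0 "a i0", simplified], of c] exp_sum[of "a i0"] by (simp add: mult.assoc)
  qed
  ultimately have "c = 0" by simp
  hence "D i0 = 0" using Dc c_def by simp
  thus ?case using others by auto
qed

lemma pcompose_power_l: "pcompose (p ^ k) q = (pcompose p q) ^ k"
proof (induction k)
  case 0
  have "pcompose 1 q = (1 :: 'a poly)" using pcompose_const[of 1 q] by (simp add: one_pCons)
  then show ?case by simp
qed (simp_all add: pcompose_mult)

lemma coprime_lin:
  fixes x y :: real
  assumes "x \<noteq> y"
  shows "coprime ([:-x,1:] ^ k) ([:-y,1:] ^ l)"
proof -
  have "coprime [:-x,1:] [:-y,1:]"
  proof (rule coprimeI)
    fix c assume "c dvd [:-x,1:]" "c dvd [:-y,1:]"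
    hence "c dvd [:-x,1:] - [:-y,1:]" by (rule dvd_diff)
    moreover have "[:-x,1:] - [:-y,1:] = [:y - x:]" by simp
    moreover have "is_unit [:y - x:]" using assms by (simp add: is_unit_const_poly_iff dvd_field_iff)
    ultimately show "is_unit c" using dvd_unit_imp_unit by metis
  qed
  thus ?thesis by simp
qed

lemma prod_lin_dvd:
  fixes a :: "nat \<Rightarrow> real"
  assumes "finite A" "inj_on a A" "\<forall>j\<in>A. [:-a j,1:]^(n j) dvd W"
  shows "(\<Prod>j\<in>A. [:-a j,1:]^(n j)) dvd W"
  using assms
proof (induction A rule: finite_induct)
  case empty then show ?case by simp
next
  case (insert x A)
  have cj: "coprime ([:-a x,1:]^(n x)) ([:-a j,1:]^(n j))" if "j \<in> A" for j
  proof -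
    have "a x \<noteq> a j" using insert.prems(1) insert.hyps(2) that by (metis inj_on_contraD insertCI)
    thus ?thesis by (rule coprime_lin)
  qed
  have "coprime ([:-a x,1:]^(n x)) (\<Prod>j\<in>A. [:-a j,1:]^(n j))"
    by (rule prod_coprime_right) (rule cj)
  moreover have "(\<Prod>j\<in>A. [:-a j,1:]^(n j)) dvd W" using insert by auto
  moreover have "[:-a x,1:]^(n x) dvd W" using insert by auto
  ultimately show ?case using insert.hyps by (simp add: divides_mult)
qed

lemma coeff_mult_bound:
  fixes p q :: "real poly"
  assumes "degree p \<le> dp" "degree q \<le> dq"
  shows "coeff (p * q) (dp + dq) = coeff p dp * coeff q dq"
proof -
  have "coeff (p * q) (dp + dq) = (\<Sum>t\<le>dp+dq. coeff p t * coeff q (dp + dq - t))"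
    by (simp add: coeff_mult)
  also have "\<dots> = (\<Sum>t\<in>{dp}. coeff p t * coeff q (dp + dq - t))"
  proof (rule sum.mono_neutral_right)
    show "\<forall>i\<in>{..dp + dq} - {dp}. coeff p i * coeff q (dp + dq - i) = 0"
    proof
      fix t assume "t \<in> {..dp + dq} - {dp}"
      hence "t > dp \<or> t < dp" by auto
      thus "coeff p t * coeff q (dp + dq - t) = 0"
      proof
        assume "t > dp" thus ?thesis using assms(1) by (simp add: coeff_eq_0)
      next
        assume "t < dp" hence "dp + dq - t > degree q" using assms(2) by linarith
        thus ?thesis by (simp add: coeff_eq_0)
      qed
    qed
  qed auto
  finally show ?thesis by simp
qed

lemma pc_shift1: "pcompose [:-c,1:] [:c,1::real:] = [:0,1:]"
  by (simp add: pcompose_pCons)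
lemma pc_shift2: "pcompose [:c,1:] [:-c,1::real:] = [:0,1:]"
  by (simp add: pcompose_pCons)
lemma pc_lin: "pcompose [:-b,1:] [:c,1::real:] = [:c - b,1:]"
  by (simp add: pcompose_pCons)

lemma pc_back: "pcompose (pcompose Z [:c,1::real:]) [:-c,1:] = Z"
  by (simp add: pcompose_assoc[symmetric] pc_shift2)

lemma degree_Dp:
  "degree (\<Prod>q\<in>A. [:b q,1::real:]^(n q)) = (\<Sum>q\<in>A. n q)"
  by (subst degree_prod_eq_sum_degree) (auto simp: degree_linear_power)

lemma lead_Dp:
  "lead_coeff (\<Prod>q\<in>A. [:b q,1::real:]^(n q)) = 1"
  by (simp add: lead_coeff_prod lead_coeff_power)

lemma coeff_pcompose_shift:
  fixes V :: "real poly"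
  assumes "degree V \<le> d"
  shows "coeff (pcompose V [:c,1:]) d = coeff V d"
proof (cases "degree V = d")
  case True
  then show ?thesis using lead_coeff_comp[of "[:c,1:]" V] by (simp add: degree_pcompose)
next
  case False
  hence "degree V < d" using assms by simp
  then show ?thesis by (simp add: coeff_eq_0 degree_pcompose)
qed

lemma residue_sum:
  fixes a :: "nat \<Rightarrow> real" and n :: "nat \<Rightarrow> nat" and V :: "nat \<Rightarrow> real poly"
  assumes inj: "inj_on a {..<p}" and mN: "m < (\<Sum>q<p. n q)"
    and bV: "\<forall>i<p. bnd (V i) (n i)"
    and cong: "\<forall>i<p. \<forall>k<n i. coeff (V i * (\<Prod>q\<in>{..<p}-{i}. [:a i - a q, 1:]^(n q))) k = coeff ([:a i, 1:]^m) k"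
  shows "(\<Sum>i<p. if n i = 0 then 0 else coeff (V i) (n i - 1)) = (if m = (\<Sum>q<p. n q) - 1 then 1 else 0)"
proof -
  define N where "N = (\<Sum>q<p. n q)"
  define Dp where "Dp i = (\<Prod>q\<in>{..<p}-{i}. [:-a q,1:]^(n q))" for i
  define T where "T i = pcompose (V i) [:-a i,1:] * Dp i" for i
  define W where "W = (\<Sum>i<p. T i) - [:0,1:]^m"
  have Nsplit: "N = n i + (\<Sum>q\<in>{..<p}-{i}. n q)" if "i < p" for i
    unfolding N_def using that by (simp add: sum.remove)
  have dvdj: "[:-a j,1:]^(n j) dvd W" if jp: "j < p" for j
  proof -
    have Wsplit: "W = (\<Sum>i\<in>{..<p}-{j}. T i) + (T j - [:0,1:]^m)"
      unfolding W_def using jp by (simp add: sum.remove)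
    have A: "[:-a j,1:]^(n j) dvd (\<Sum>i\<in>{..<p}-{j}. T i)"
    proof (rule dvd_sum)
      fix i assume "i \<in> {..<p}-{j}"
      hence "j \<in> {..<p}-{i}" using jp by auto
      hence "[:-a j,1:]^(n j) dvd Dp i" unfolding Dp_def by (intro dvd_prodI) auto
      thus "[:-a j,1:]^(n j) dvd T i" unfolding T_def by simp
    qed
    have pcD: "pcompose (Dp j) [:a j,1:] = (\<Prod>q\<in>{..<p}-{j}. [:a j - a q, 1:]^(n q))"
      unfolding Dp_def by (simp add: pcompose_prod pcompose_power_l pc_lin)
    have pcZ: "pcompose (T j - [:0,1:]^m) [:a j,1:] = V j * (\<Prod>q\<in>{..<p}-{j}. [:a j - a q, 1:]^(n q)) - [:a j,1:]^m"
      unfolding T_def pcompose_diff pcompose_mult pcD pcompose_power_l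
      by (simp add: pcompose_assoc[symmetric] pc_shift1 pcompose_pCons)
    have "monom 1 (n j) dvd pcompose (T j - [:0,1:]^m) [:a j,1:]"
      unfolding pcZ monom_1_dvd_iff' using cong jp by simp
    then obtain r where r: "pcompose (T j - [:0,1:]^m) [:a j,1:] = monom 1 (n j) * r" by (elim dvdE)
    have "T j - [:0,1:]^m = pcompose (monom 1 (n j)) [:-a j,1:] * pcompose r [:-a j,1:]"
      using arg_cong[OF r, of "\<lambda>z. pcompose z [:-a j,1:]"] by (simp add: pc_back pcompose_mult)
    also have "pcompose (monom 1 (n j)) [:-a j,1:] = [:-a j,1:]^(n j)"
      by (simp add: monom_altdef pcompose_power_l pcompose_pCons)
    finally have B: "[:-a j,1:]^(n j) dvd (T j - [:0,1:]^m)" by simp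
    show ?thesis unfolding Wsplit using A B by simp
  qed
  have Dall: "(\<Prod>j\<in>{..<p}. [:-a j,1:]^(n j)) dvd W"
    using prod_lin_dvd[of "{..<p}" a n W] inj dvdj by auto
  have degDall: "degree (\<Prod>j\<in>{..<p}. [:-a j,1:]^(n j)) = N"
    unfolding N_def by (rule degree_Dp)
  have N1: "N \<ge> 1" using mN N_def by simp
  have degT: "degree (T i) \<le> N - 1" if ip: "i < p" for i
  proof (cases "V i = 0")
    case True then show ?thesis by (simp add: T_def)
  next
    case False
    hence "degree (V i) < n i" using bV ip bnd_degree by blast
    moreover have "degree (Dp i) = (\<Sum>q\<in>{..<p}-{i}. n q)" unfolding Dp_def by (rule degree_Dp)
    ultimately have "degree (pcompose (V i) [:-a i,1:]) + degree (Dp i) \<le> N - 1"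
      using Nsplit[OF ip] by (simp add: degree_pcompose)
    thus ?thesis unfolding T_def using degree_mult_le order.trans by blast
  qed
  have degW: "degree W \<le> N - 1"
  proof -
    have "degree (\<Sum>i<p. T i) \<le> N - 1" by (rule degree_sum_le) (use degT in auto)
    moreover have "degree ([:0,1::real:]^m) \<le> N - 1" using mN N_def by (simp add: degree_linear_power)
    ultimately show ?thesis unfolding W_def by (rule degree_diff_le)
  qed
  have W0: "W = 0"
  proof (rule ccontr)
    assume "W \<noteq> 0"
    hence "N \<le> degree W" using dvd_imp_degree_le[OF Dall] degDall by simp
    thus False using degW N1 by simp
  qed
  have cT: "coeff (T i) (N - 1) = (if n i = 0 then 0 else coeff (V i) (n i - 1))" if ip: "i < p" for i
  proof (cases "n i = 0")
    case True
    hence "V i = 0" using bV ip bnd_zero by auto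
    then show ?thesis using True by (simp add: T_def)
  next
    case False
    have dV: "degree (V i) \<le> n i - 1"
      using bV ip bnd_degree[of "V i" "n i"] by (cases "V i = 0") auto
    have dDp: "degree (Dp i) \<le> (\<Sum>q\<in>{..<p}-{i}. n q)" unfolding Dp_def by (simp add: degree_Dp)
    have NN: "N - 1 = (n i - 1) + (\<Sum>q\<in>{..<p}-{i}. n q)" using Nsplit[OF ip] False by simp
    have dVc: "degree (pcompose (V i) [:-a i,1:]) \<le> n i - 1" using dV by (simp add: degree_pcompose)
    have "coeff (T i) (N - 1) = coeff (pcompose (V i) [:-a i,1:]) (n i - 1) * coeff (Dp i) (\<Sum>q\<in>{..<p}-{i}. n q)"
      unfolding T_def NN by (rule coeff_mult_bound[OF dVc dDp])
    also have "coeff (Dp i) (\<Sum>q\<in>{..<p}-{i}. n q) = 1"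
      using lead_Dp[where b="\<lambda>q. - a q" and A="{..<p}-{i}" and n=n] unfolding Dp_def by (simp add: degree_Dp)
    also have "coeff (pcompose (V i) [:-a i,1:]) (n i - 1) = coeff (V i) (n i - 1)"
      by (rule coeff_pcompose_shift[OF dV])
    finally show ?thesis using False by simp
  qed
  have "0 = coeff W (N - 1)" using W0 by simp
  also have "\<dots> = (\<Sum>i<p. coeff (T i) (N - 1)) - (if m = N - 1 then 1 else 0)"
    unfolding W_def by (simp add: coeff_diff coeff_sum monom_altdef[of 1, simplified, symmetric] coeff_monom)
  finally show ?thesis using cT N_def by simp
qed

lemma binv_step:
  fixes c d :: real
  assumes cd: "c * d = -1"
  shows "Abs_fps (\<lambda>l. pochhammer (real (Suc k)) l / fact l * c^l) * (fps_const d + fps_X)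
       = fps_const d * Abs_fps (\<lambda>l. pochhammer (real k) l / fact l * c^l)"
proof (rule fps_ext)
  fix l
  show "(Abs_fps (\<lambda>l. pochhammer (real (Suc k)) l / fact l * c^l) * (fps_const d + fps_X)) $ l
       = (fps_const d * Abs_fps (\<lambda>l. pochhammer (real k) l / fact l * c^l)) $ l"
  proof (cases l)
    case 0 then show ?thesis by (simp add: distrib_left)
  next
    case (Suc j)
    have r1: "pochhammer (real k + 1) (Suc j) = (real k + 1 + real j) * pochhammer (real k + 1) j"
      by (simp add: pochhammer_rec')
    have r2: "pochhammer (real k) (Suc j) = real k * pochhammer (real k + 1) j"
      by (simp add: pochhammer_rec)
    have f: "fact (Suc j) = (real j + 1) * (fact j :: real)" by (simp add: algebra_simps)
    have cd': "d * c ^ Suc j = - (c ^ j)"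
    proof -
      have "d * c ^ Suc j = (c * d) * c ^ j" by (simp add: mult_ac)
      thus ?thesis using cd by simp
    qed
    have fj: "(fact j :: real) > 0" "real j + 1 > 0" by auto
    have "(Abs_fps (\<lambda>l. pochhammer (real (Suc k)) l / fact l * c^l) * (fps_const d + fps_X)) $ Suc j
        = d * (pochhammer (real k + 1) (Suc j) / fact (Suc j) * c^Suc j) + pochhammer (real k + 1) j / fact j * c^j"
      by (simp add: distrib_left mult.commute[of _ fps_X] add.commute del: fact_Suc pochhammer_Suc power_Suc)
    also have "\<dots> = c^j * (pochhammer (real k + 1) j / fact j - pochhammer (real k + 1) (Suc j) / fact (Suc j))"
    proof -
      have "d * (pochhammer (real k + 1) (Suc j) / fact (Suc j) * c^Suc j) = (pochhammer (real k + 1) (Suc j) / fact (Suc j)) * (d * c^Suc j)"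
        by (simp only: mult_ac)
      also have "\<dots> = - (c^j * (pochhammer (real k + 1) (Suc j) / fact (Suc j)))" unfolding cd' by simp
      finally show ?thesis by (simp add: right_diff_distrib)
    qed
    also have "\<dots> = d * (pochhammer (real k) (Suc j) / fact (Suc j) * c^Suc j)"
    proof -
      have gen: "cc * (P / F - (K + J) * P / (J * F)) = - (K * P / (J * F) * cc)" if "F \<noteq> 0" "J \<noteq> 0" for cc P F J K :: real
        using that by (simp add: field_simps)
      have "d * (pochhammer (real k) (Suc j) / fact (Suc j) * c^Suc j) = (pochhammer (real k) (Suc j) / fact (Suc j)) * (d * c^Suc j)"
        by (simp only: mult_ac)
      also have "\<dots> = - (real k * pochhammer (real k + 1) j / ((real j + 1) * fact j) * c^j)"
        unfolding cd' r2 f by simp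
      also have "\<dots> = c^j * (pochhammer (real k + 1) j / fact j - (real k + (real j + 1)) * pochhammer (real k + 1) j / ((real j + 1) * fact j))"
        using gen[of "fact j" "real j + 1" "c^j" "pochhammer (real k + 1) j" "real k"] fj by simp
      also have "\<dots> = c^j * (pochhammer (real k + 1) j / fact j - pochhammer (real k + 1) (Suc j) / fact (Suc j))"
        unfolding r1 f by (simp add: algebra_simps)
      finally show ?thesis by simp
    qed
    also have "\<dots> = (fps_const d * Abs_fps (\<lambda>l. pochhammer (real k) l / fact l * c^l)) $ Suc j" by simp
    finally show ?thesis using Suc by simp
  qed
qed

lemma binv:
  fixes c d :: real
  assumes cd: "c * d = -1"
  shows "Abs_fps (\<lambda>l. pochhammer (real k) l / fact l * c^l) * (fps_const d + fps_X)^k = fps_const (d^k)"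
proof (induction k)
  case 0
  have "Abs_fps (\<lambda>l. pochhammer (real 0) l / fact l * c^l) = 1"
    by (rule fps_ext) (simp add: pochhammer_0_left)
  then show ?case by simp
next
  case (Suc k)
  have "Abs_fps (\<lambda>l. pochhammer (real (Suc k)) l / fact l * c^l) * (fps_const d + fps_X)^Suc k
      = (Abs_fps (\<lambda>l. pochhammer (real (Suc k)) l / fact l * c^l) * (fps_const d + fps_X)) * (fps_const d + fps_X)^k"
    by (simp only: power_Suc mult.assoc)
  also have "\<dots> = (fps_const d * Abs_fps (\<lambda>l. pochhammer (real k) l / fact l * c^l)) * (fps_const d + fps_X)^k"
    by (simp only: binv_step[OF cd])
  also have "\<dots> = fps_const d * (Abs_fps (\<lambda>l. pochhammer (real k) l / fact l * c^l) * (fps_const d + fps_X)^k)"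
    by (simp only: mult.assoc)
  also have "\<dots> = fps_const (d ^ Suc k)" using Suc by (simp add: fps_const_mult[symmetric] del: fps_const_mult)
  finally show ?case .
qed

definition hh :: "real \<Rightarrow> nat \<Rightarrow> nat \<Rightarrow> real" where
  "hh x m u = (\<Sum>t\<le>u. real (m choose t) * x ^ m / x ^ t / fact (u - t))"

lemma hh_fps:
  assumes "x \<noteq> 0"
  shows "Abs_fps (hh x m) = fps_of_poly ([:x,1:]^m) * fps_exp 1"
proof (rule fps_ext)
  fix u
  have "(fps_of_poly ([:x,1:]^m) * fps_exp 1) $ u = (\<Sum>t=0..u. coeff ([:x,1:]^m) t * (1 / fact (u - t)))"
    by (simp add: fps_mult_nth)
  also have "\<dots> = hh x m u" unfolding hh_def atLeast0AtMost
  proof (intro sum.cong refl)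
    fix t assume "t \<in> {..u}"
    show "coeff ([:x,1:]^m) t * (1 / fact (u - t)) = real (m choose t) * x ^ m / x ^ t / fact (u - t)"
    proof (cases "t \<le> m")
      case True
      then show ?thesis using assms coeff_linear_poly_power[OF True, of x 1] by (simp add: power_diff)
    next
      case False then show ?thesis by (simp add: coeff_eq_0 degree_linear_power)
    qed
  qed
  finally show "Abs_fps (hh x m) $ u = (fps_of_poly ([:x,1:]^m) * fps_exp 1) $ u" by simp
qed

lemma poch_neg:
  assumes "s < n"
  shows "pochhammer (1 - real n) s = (-1)^s * fact (n - 1) / fact (n - 1 - s)"
proof -
  have e: "1 - real n = - real (n - 1)" using assms by simp
  have "pochhammer (1 - real n) s = (-1)^s * pochhammer (real (n - 1) - real s + 1) s"
    unfolding e by (rule pochhammer_minus)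
  also have "pochhammer (real (n - 1) - real s + 1) s = fact s * (real (n - 1) gchoose s)"
    by (simp add: gbinomial_pochhammer')
  also have "real (n - 1) gchoose s = fact (n - 1) / (fact s * fact (n - 1 - s))"
    using binomial_gbinomial[of "n-1" s, symmetric] assms by (simp add: binomial_fact)
  finally show ?thesis by simp
qed

lemma alt_sum:
  fixes G :: "real fps"
  assumes "n \<ge> 1"
  shows "(\<Sum>s<n. pochhammer (1 - real n) s * G $ s) = (-1)^(n-1) * fact (n-1) * (fps_exp (-1) * G) $ (n-1)"
proof -
  have "(fps_exp (-1) * G) $ (n-1) = (\<Sum>i=0..n-1. (-1)^i / fact i * G $ (n - 1 - i))"
    by (simp add: fps_mult_nth)
  also have "\<dots> = (\<Sum>s=0..n-1. (-1)^(n-1-s) / fact (n-1-s) * G $ s)"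
  proof (subst sum.atLeastAtMost_rev, intro sum.cong refl)
    fix x assume "x \<in> {0..n-1}"
    hence "n - 1 + 0 - x \<le> n - 1" "n - 1 - (n - 1 + 0 - x) = x" using assms by auto
    thus "(-1)^(n - 1 + 0 - x) / fact (n - 1 + 0 - x) * G $ (n - 1 - (n - 1 + 0 - x)) = (-1)^(n-1-x) / fact (n-1-x) * G $ x"
      by simp
  qed
  finally have e: "(fps_exp (-1) * G) $ (n-1) = (\<Sum>s<n. (-1)^(n-1-s) / fact (n-1-s) * G $ s)"
    using assms by (metis Suc_diff_1 atLeast0AtMost lessThan_Suc_atMost less_le_trans zero_less_one)
  have "(-1)^(n-1) * fact (n-1) * (fps_exp (-1) * G) $ (n-1)
      = (\<Sum>s<n. (-1)^(n-1) * fact (n-1) * ((-1)^(n-1-s) / fact (n-1-s) * G $ s))"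
    unfolding e by (simp add: sum_distrib_left)
  also have "\<dots> = (\<Sum>s<n. pochhammer (1 - real n) s * G $ s)"
  proof (intro sum.cong refl)
    fix s assume "s \<in> {..<n}"
    hence sn: "s < n" by simp
    have "(-1::real)^(n-1) = (-1)^s * (-1)^(n-1-s)"
      using sn by (simp add: power_add[symmetric])
    hence "(-1::real)^(n-1) * (-1)^(n-1-s) = (-1)^s * ((-1)^(n-1-s))^2"
      by (simp add: power2_eq_square)
    moreover have "((-1::real)^(n-1-s))^2 = 1"
      by (simp add: power2_eq_square power_mult_distrib[symmetric])
    ultimately have pm: "(-1::real)^(n-1) * (-1)^(n-1-s) = (-1)^s" by simp
    show "(-1)^(n-1) * fact (n-1) * ((-1)^(n-1-s) / fact (n-1-s) * G $ s) = pochhammer (1 - real n) s * G $ s"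
      unfolding poch_neg[OF sn] using pm by (simp add: field_simps)
  qed
  finally show ?thesis by simp
qed

definition Tset :: "nat \<Rightarrow> nat \<Rightarrow> (nat \<Rightarrow> nat) set" where
  "Tset p s = {l. (\<forall>q. p \<le> q \<longrightarrow> l q = 0) \<and> (\<Sum>q<p. l q) = s}"

lemma finite_bounded_funs: "finite {l::nat\<Rightarrow>nat. (\<forall>q. p \<le> q \<longrightarrow> l q = 0) \<and> (\<Sum>q<p. l q) \<le> s}"
proof (rule finite_subset)
  show "finite {l. \<forall>x. (x \<in> {..<p} \<longrightarrow> l x \<in> {..s}) \<and> (x \<notin> {..<p} \<longrightarrow> l x = (0::nat))}"
    using finite_set_of_finite_funs[of "{..<p}" "{..s}" 0] by simp
  show "{l::nat\<Rightarrow>nat. (\<forall>q. p \<le> q \<longrightarrow> l q = 0) \<and> (\<Sum>q<p. l q) \<le> s}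
    \<subseteq> {l. \<forall>x. (x \<in> {..<p} \<longrightarrow> l x \<in> {..s}) \<and> (x \<notin> {..<p} \<longrightarrow> l x = 0)}"
  proof (intro subsetI CollectI allI conjI impI)
    fix l :: "nat \<Rightarrow> nat" and x
    assume a: "l \<in> {l::nat\<Rightarrow>nat. (\<forall>q. p \<le> q \<longrightarrow> l q = 0) \<and> (\<Sum>q<p. l q) \<le> s}"
    { assume "x \<in> {..<p}"
      thus "l x \<in> {..s}" using a member_le_sum[of x "{..<p}" l] by auto }
    { assume "x \<notin> {..<p}"
      thus "l x = 0" using a by auto }
  qed
qed

lemma finite_Tset: "finite (Tset p s)"
  by (rule finite_subset[OF _ finite_bounded_funs[of p s]]) (auto simp: Tset_def)

lemma multi_index:
  "(\<Sum>l\<in>Tset p s. \<Prod>q<p. f q (l q)) = (\<Prod>q<p. Abs_fps (f q)) $ s"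
proof (induction p arbitrary: s)
  case 0
  have "Tset 0 s = (if s = 0 then {\<lambda>_. 0} else {})" by (auto simp: Tset_def)
  then show ?case by simp
next
  case (Suc p)
  define g where "g = (\<lambda>u l. (\<Prod>q<p. f q (l q)) * f p (s - u))"
  have "(\<Prod>q<Suc p. Abs_fps (f q)) $ s = ((\<Prod>q<p. Abs_fps (f q)) * Abs_fps (f p)) $ s" by simp
  also have "\<dots> = (\<Sum>u\<in>{0..s}. (\<Sum>l\<in>Tset p u. \<Prod>q<p. f q (l q)) * f p (s - u))"
    by (simp add: fps_mult_nth Suc.IH)
  also have "\<dots> = (\<Sum>u\<in>{0..s}. \<Sum>l\<in>Tset p u. g u l)"
    by (simp add: g_def sum_distrib_right)
  also have "\<dots> = (\<Sum>(u,l)\<in>Sigma {0..s} (Tset p). g u l)"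
    by (rule sum.Sigma) (auto simp: finite_Tset)
  also have "\<dots> = (\<Sum>l\<in>Tset (Suc p) s. \<Prod>q<Suc p. f q (l q))"
  proof (rule sum.reindex_bij_witness[where j="\<lambda>(u,l). l(p := s - u)" and i="\<lambda>l. (\<Sum>q<p. l q, l(p := 0))"])
    fix x assume x: "x \<in> Sigma {0..s} (Tset p)"
    then obtain u l where xe: "x = (u, l)" and u: "u \<le> s" and l: "l \<in> Tset p u" by auto
    have lp: "l p = 0" using l by (simp add: Tset_def)
    have sl: "(\<Sum>q<p. (l(p := v)) q) = (\<Sum>q<p. l q)" for v by (intro sum.cong) auto
    have su: "(\<Sum>q<p. l q) = u" using l by (simp add: Tset_def)
    show "(\<lambda>l. (\<Sum>q<p. l q, l(p := 0))) ((\<lambda>(u, l). l(p := s - u)) x) = x"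
      using xe sl su lp by (simp add: fun_upd_idem)
    show "(\<lambda>(u, l). l(p := s - u)) x \<in> Tset (Suc p) s"
      using xe sl su u l by (auto simp: Tset_def)
    have pr: "(\<Prod>q<p. f q ((l(p := s - u)) q)) = (\<Prod>q<p. f q (l q))" by (intro prod.cong) auto
    show "(\<Prod>q<Suc p. f q (((\<lambda>(u, l). l(p := s - u)) x) q)) = (\<lambda>(u,l). g u l) x"
      using xe pr by (simp add: g_def)
  next
    fix l assume l: "l \<in> Tset (Suc p) s"
    have sl: "(\<Sum>q<p. (l(p := v)) q) = (\<Sum>q<p. l q)" for v by (intro sum.cong) auto
    have ss: "(\<Sum>q<p. l q) + l p = s" using l by (simp add: Tset_def)
    show "(\<lambda>(u, l). l(p := s - u)) ((\<lambda>l. (\<Sum>q<p. l q, l(p := 0))) l) = l"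
      using ss by (auto simp: fun_eq_iff)
    show "(\<lambda>l. (\<Sum>q<p. l q, l(p := 0))) l \<in> Sigma {0..s} (Tset p)"
      using ss sl l by (auto simp: Tset_def)
  qed
  finally show ?case by simp
qed

fun ff :: "nat \<Rightarrow> real poly" where
  "ff 0 = 1"
| "ff (Suc m) = ff m * [:- of_nat m, 1:]"

lemma ff_nz: "ff m \<noteq> 0"
proof (induction m)
  case (Suc m)
  have "[:-of_nat m,1::real:] \<noteq> 0" by simp
  thus ?case using Suc by (metis ff.simps(2) mult_eq_0_iff)
qed simp

lemma degree_ff: "degree (ff m) = m"
proof (induction m)
  case (Suc m)
  have "degree (ff m * [:-of_nat m,1:]) = degree (ff m) + degree [:-of_nat m,1::real:]"
    by (rule degree_mult_eq) (use ff_nz in auto)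
  thus ?case using Suc by simp
qed simp

lemma lead_ff: "coeff (ff m) m = 1"
proof -
  have "lead_coeff (ff m) = 1"
  proof (induction m)
    case (Suc m)
    have "lead_coeff (ff (Suc m)) = lead_coeff (ff m) * lead_coeff [:-of_nat m,1::real:]"
      by (simp only: ff.simps lead_coeff_mult)
    thus ?case using Suc by simp
  qed simp
  thus ?thesis by (simp add: degree_ff)
qed

lemma poly_ff: "poly (ff m) (real k) = (if m \<le> k then fact k / fact (k - m) else 0)"
proof (induction m)
  case 0 then show ?case by simp
next
  case (Suc m)
  show ?case
  proof (cases "Suc m \<le> k")
    case True
    have km: "k - m = Suc (k - Suc m)" using True by simp
    have fe: "fact (k - m) = real (k - m) * (fact (k - Suc m) :: real)"
      unfolding km by (simp del: of_nat_Suc)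
    have rk: "real (k - m) = real k - real m" using True by simp
    have nz: "(fact (k - Suc m) :: real) \<noteq> 0" "real k - real m \<noteq> 0" using True by auto
    have "poly (ff (Suc m)) (real k) = poly (ff m) (real k) * (real k - real m)"
      by (simp add: algebra_simps)
    also have "\<dots> = fact k / fact (k - m) * (real k - real m)"
      using Suc True by simp
    also have "\<dots> = fact k / ((real k - real m) * fact (k - Suc m)) * (real k - real m)"
      using fe rk by simp
    also have "\<dots> = fact k / fact (k - Suc m)" using nz by simp
    finally show ?thesis using True by simp
  next
    case False
    then show ?thesis using Suc by (cases "m = k") auto
  qed
qed

lemma sums_binom: "(\<lambda>j. real (j choose r) * x^j / fact j) sums (x^r * exp x / fact r)"
proof -
  have "(\<lambda>j. x^r / fact r * (x^j / fact j)) sums (x^r / fact r * exp x)"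
    by (rule sums_mult) (use exp_converges[of x] in \<open>simp add: divide_inverse mult.commute scaleR_conv_of_real\<close>)
  moreover have "real ((j + r) choose r) * x^(j + r) / fact (j + r) = x^r / fact r * (x^j / fact j)" for j
    using binomial_fact[of r "j + r", where 'a=real] by (simp add: power_add field_simps)
  ultimately have "(\<lambda>j. real ((j + r) choose r) * x^(j + r) / fact (j + r)) sums (x^r * exp x / fact r)"
    by simp
  thus ?thesis by (subst (asm) sums_zero_iff_shift) auto
qed

lemma sums_T:
  fixes x :: real
  assumes x: "x \<noteq> 0"
  shows "(\<lambda>k. poly (ff m) (real k) * (real (k choose u) / x^u) * (x^k / fact k)) sums (exp x * hh x m u)"
proof -
  define f where "f k = poly (ff m) (real k) * (real (k choose u) / x^u) * (x^k / fact k)" for k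
  have shift: "f (j + m) = (\<Sum>t\<le>u. real (m choose t) * x^m / x^u * (real (j choose (u - t)) * x^j / fact j))" for j
  proof -
    have "f (j + m) = real ((m + j) choose u) * x^m / x^u * (x^j / fact j)"
      unfolding f_def poly_ff by (simp add: power_add field_simps add.commute)
    also have "real ((m + j) choose u) = (\<Sum>t\<le>u. real (m choose t) * real (j choose (u - t)))"
      by (simp flip: vandermonde)
    also have "(\<Sum>t\<le>u. real (m choose t) * real (j choose (u - t))) * x^m / x^u * (x^j / fact j)
       = (\<Sum>t\<le>u. real (m choose t) * x^m / x^u * (real (j choose (u - t)) * x^j / fact j))"
      unfolding sum_distrib_right sum_divide_distrib by (intro sum.cong refl) (simp add: field_simps)
    finally show ?thesis .
  qed
  have "(\<lambda>j. \<Sum>t\<le>u. real (m choose t) * x^m / x^u * (real (j choose (u - t)) * x^j / fact j))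
      sums (\<Sum>t\<le>u. real (m choose t) * x^m / x^u * (x^(u - t) * exp x / fact (u - t)))"
    by (intro sums_sum sums_mult sums_binom)
  moreover have "(\<Sum>t\<le>u. real (m choose t) * x^m / x^u * (x^(u - t) * exp x / fact (u - t))) = exp x * hh x m u"
    unfolding hh_def sum_distrib_left
  proof (intro sum.cong refl)
    fix t assume "t \<in> {..u}"
    hence "x^u = x^t * x^(u - t)" by (simp add: power_add[symmetric])
    thus "real (m choose t) * x^m / x^u * (x^(u - t) * exp x / fact (u - t)) = exp x * (real (m choose t) * x ^ m / x ^ t / fact (u - t))"
      using x by (simp add: field_simps)
  qed
  ultimately have "(\<lambda>j. f (j + m)) sums (exp x * hh x m u)" unfolding shift by simp
  moreover have "f i = 0" if "i < m" for i using that by (simp add: f_def poly_ff)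
  ultimately show ?thesis using sums_zero_iff_shift[of m f] unfolding f_def by simp
qed

lemma fps_const_prod: "fps_const (\<Prod>x\<in>A. f x) = (\<Prod>x\<in>A. fps_const (f x) :: real fps)"
  by (induction A rule: infinite_finite_induct) (simp_all add: fps_const_mult[symmetric] del: fps_const_mult)

definition Pi_i :: "nat \<Rightarrow> (nat \<Rightarrow> real) \<Rightarrow> (nat \<Rightarrow> nat) \<Rightarrow> nat \<Rightarrow> real" where
  "Pi_i p a n i = (\<Prod>q\<in>{..<p} - {i}. (a i - a q) ^ n q)"

definition Kc :: "nat \<Rightarrow> (nat \<Rightarrow> real) \<Rightarrow> (nat \<Rightarrow> nat) \<Rightarrow> nat \<Rightarrow> real" where
  "Kc p a n i = (-1) ^ (n i - 1) * exp (- a i) / (fact (n i - 1) * Pi_i p a n i)"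

definition Sset :: "nat \<Rightarrow> (nat \<Rightarrow> nat) \<Rightarrow> nat \<Rightarrow> (nat \<Rightarrow> nat) set" where
  "Sset p n i = {l. (\<forall>q. p \<le> q \<longrightarrow> l q = 0) \<and> (\<Sum>q<p. l q) < n i}"

definition bq :: "(nat \<Rightarrow> real) \<Rightarrow> (nat \<Rightarrow> nat) \<Rightarrow> nat \<Rightarrow> nat \<Rightarrow> nat \<Rightarrow> real" where
  "bq a n i q l = pochhammer (real (n q)) l / fact l * (1 / (a q - a i)) ^ l"

definition coefS :: "nat \<Rightarrow> (nat \<Rightarrow> real) \<Rightarrow> (nat \<Rightarrow> nat) \<Rightarrow> nat \<Rightarrow> (nat \<Rightarrow> nat) \<Rightarrow> real" where
  "coefS p a n i l = pochhammer (1 - real (n i)) (\<Sum>q<p. l q) * (\<Prod>q\<in>{..<p} - {i}. bq a n i q (l q))"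

definition Qp :: "real \<Rightarrow> nat \<Rightarrow> real poly" where
  "Qp x u = smult ((-1 / x) ^ u / fact u) (\<Prod>t<u. [:of_nat t, -1:])"

definition Cf :: "nat \<Rightarrow> (nat \<Rightarrow> real) \<Rightarrow> (nat \<Rightarrow> nat) \<Rightarrow> nat \<Rightarrow> real poly" where
  "Cf p a n i = smult (Kc p a n i) (\<Sum>l\<in>Sset p n i. smult (coefS p a n i l) (Qp (a i) (l i)))"

lemma finite_Sset: "finite (Sset p n i)"
  by (rule finite_subset[OF _ finite_bounded_funs[of p "n i"]]) (auto simp: Sset_def)

lemma poly_Qp: "poly (Qp x u) y = pochhammer (- y) u * (-1 / x) ^ u / fact u"
proof -
  have "poly (\<Prod>t<u. [:of_nat t, -1:]) y = (\<Prod>t<u. - y + of_nat t)"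
    by (simp add: poly_prod)
  also have "\<dots> = pochhammer (- y) u" by (simp add: pochhammer_prod atLeast0LessThan)
  finally show ?thesis by (simp add: Qp_def)
qed

lemma poly_Qp_nat:
  assumes "x \<noteq> 0"
  shows "poly (Qp x u) (real k) = real (k choose u) / x ^ u"
proof -
  have "real (k choose u) = (-1) ^ u * pochhammer (- real k) u / fact u"
    by (simp add: binomial_gbinomial gbinomial_pochhammer)
  moreover have "(-1 / x) ^ u = (-1) ^ u / x ^ u" by (rule power_divide)
  ultimately show ?thesis by (simp add: poly_Qp mult_ac)
qed

lemma degree_Qp: "degree (Qp x u) \<le> u"
proof -
  have "degree (\<Prod>t<u. [:of_nat t, -1::real:]) \<le> (\<Sum>t<u. degree [:of_nat t, -1::real:])"
    using degree_prod_sum_le[of "{..<u}" "\<lambda>t. [:of_nat t, -1::real:]"] by (simp add: o_def)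
  also have "\<dots> = u" by simp
  finally show ?thesis unfolding Qp_def using degree_smult_le order.trans by blast
qed

lemma poly_Cf: "poly (Cf p a n i) x = charlier_formula p a n i x"
  unfolding Cf_def charlier_formula_def Kc_def Pi_i_def Sset_def coefS_def bq_def
  by (simp add: poly_sum poly_Qp sum_distrib_left mult_ac)

lemma degree_Cf:
  assumes "n i \<ge> 1"
  shows "degree (Cf p a n i) \<le> n i - 1"
proof -
  have "degree (\<Sum>l\<in>Sset p n i. smult (coefS p a n i l) (Qp (a i) (l i))) \<le> n i - 1"
  proof (rule degree_sum_le)
    fix l assume l: "l \<in> Sset p n i"
    have "l i \<le> n i - 1"
    proof (cases "i < p")
      case True
      hence "l i \<le> (\<Sum>q<p. l q)" by (intro member_le_sum) auto
      thus ?thesis using l by (auto simp: Sset_def)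
    next
      case False thus ?thesis using l by (auto simp: Sset_def)
    qed
    thus "degree (smult (coefS p a n i l) (Qp (a i) (l i))) \<le> n i - 1"
      using degree_Qp[of "a i" "l i"] degree_smult_le order.trans by fastforce
  qed (rule finite_Sset)
  thus ?thesis unfolding Cf_def using degree_smult_le order.trans by blast
qed

lemma Cf_zero: "n i = 0 \<Longrightarrow> Cf p a n i = 0"
  by (simp add: Cf_def Sset_def)

lemma bnd_Cf: "bnd (Cf p a n i) (n i)"
proof (cases "n i = 0")
  case True thus ?thesis by (simp add: Cf_zero bnd_def)
next
  case False
  thus ?thesis using degree_Cf[of n i p a] by (intro degree_bnd) simp
qed

lemma group_Sset:
  fixes G :: "(nat \<Rightarrow> nat) \<Rightarrow> real"
  shows "(\<Sum>l\<in>Sset p n i. pochhammer (1 - real (n i)) (\<Sum>q<p. l q) * G l)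
       = (\<Sum>s<n i. pochhammer (1 - real (n i)) s * (\<Sum>l\<in>Tset p s. G l))"
proof -
  have "(\<Sum>l\<in>Sset p n i. pochhammer (1 - real (n i)) (\<Sum>q<p. l q) * G l)
     = (\<Sum>s<n i. \<Sum>l\<in>{x. x \<in> Sset p n i \<and> (\<Sum>q<p. x q) = s}. pochhammer (1 - real (n i)) (\<Sum>q<p. l q) * G l)"
    by (rule sum.group[symmetric], rule finite_Sset, simp, auto simp: Sset_def)
  also have "\<dots> = (\<Sum>s<n i. \<Sum>l\<in>Tset p s. pochhammer (1 - real (n i)) s * G l)"
  proof -
    have TS: "{x. x \<in> Sset p n i \<and> (\<Sum>q<p. x q) = s} = Tset p s" if "s < n i" for s
      using that by (auto simp: Sset_def Tset_def)
    show ?thesis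
      apply (intro sum.cong refl)
      apply (simp add: TS)
      apply (metis (mono_tags, lifting) Tset_def mem_Collect_eq)
      done
  qed
  finally show ?thesis by (simp add: sum_distrib_left)
qed

lemma mom_Cf:
  assumes pos: "\<forall>q<p. a q > 0" and inj: "inj_on a {..<p}" and ip: "i < p" and ni: "n i \<ge> 1"
  shows "(\<Sum>k. poly (ff m) (real k) * poly (Cf p a n i) (real k) * charlier_w a i k)
    = (fps_of_poly ([:a i,1:]^m) * (\<Prod>q\<in>{..<p}-{i}. Abs_fps (bq a n i q))) $ (n i - 1) / Pi_i p a n i"
proof -
  define x where "x = a i"
  have x0: "x \<noteq> 0" using pos ip x_def by auto
  define S where "S = Sset p n i"
  define K where "K = Kc p a n i"
  define fq where "fq q = (if q = i then hh x m else bq a n i q)" for q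
  define B where "B = (\<Prod>q\<in>{..<p}-{i}. Abs_fps (bq a n i q))"
  define P where "P = fps_of_poly ([:x,1:]^m)"
  have pc: "poly (Cf p a n i) (real k) = K * (\<Sum>l\<in>S. coefS p a n i l * (real (k choose l i) / x ^ l i))" for k
    unfolding Cf_def K_def S_def by (simp add: poly_sum poly_Qp_nat[OF x0[unfolded x_def]] x_def)
  have "(\<lambda>k. \<Sum>l\<in>S. K * coefS p a n i l * (poly (ff m) (real k) * (real (k choose l i) / x ^ l i) * (x ^ k / fact k)))
     sums (\<Sum>l\<in>S. K * coefS p a n i l * (exp x * hh x m (l i)))"
    by (intro sums_sum sums_mult sums_T[OF x0])
  moreover have "(\<lambda>k. \<Sum>l\<in>S. K * coefS p a n i l * (poly (ff m) (real k) * (real (k choose l i) / x ^ l i) * (x ^ k / fact k)))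
     = (\<lambda>k. poly (ff m) (real k) * poly (Cf p a n i) (real k) * charlier_w a i k)"
    unfolding pc charlier_w_def x_def[symmetric] by (simp add: sum_distrib_left sum_distrib_right mult_ac)
  ultimately have "(\<Sum>k. poly (ff m) (real k) * poly (Cf p a n i) (real k) * charlier_w a i k)
      = K * exp x * (\<Sum>l\<in>S. coefS p a n i l * hh x m (l i))"
    by (simp add: sums_iff sum_distrib_left mult_ac)
  also have "(\<Sum>l\<in>S. coefS p a n i l * hh x m (l i))
      = (\<Sum>l\<in>S. pochhammer (1 - real (n i)) (\<Sum>q<p. l q) * (\<Prod>q<p. fq q (l q)))"
  proof (intro sum.cong refl)
    fix l
    have "(\<Prod>q<p. fq q (l q)) = fq i (l i) * (\<Prod>q\<in>{..<p}-{i}. fq q (l q))"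
      using ip by (simp add: prod.remove)
    also have "(\<Prod>q\<in>{..<p}-{i}. fq q (l q)) = (\<Prod>q\<in>{..<p}-{i}. bq a n i q (l q))"
      by (intro prod.cong) (auto simp: fq_def)
    finally show "coefS p a n i l * hh x m (l i) = pochhammer (1 - real (n i)) (\<Sum>q<p. l q) * (\<Prod>q<p. fq q (l q))"
      by (simp add: coefS_def fq_def mult_ac)
  qed
  also have "\<dots> = (\<Sum>s<n i. pochhammer (1 - real (n i)) s * (\<Prod>q<p. Abs_fps (fq q)) $ s)"
    using group_Sset[where p=p and n=n and i=i and G="\<lambda>l. \<Prod>q<p. fq q (l q)"] multi_index[where p=p and f=fq] by (simp add: S_def)
  also have "\<dots> = (-1)^(n i - 1) * fact (n i - 1) * (fps_exp (-1) * (\<Prod>q<p. Abs_fps (fq q))) $ (n i - 1)"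
    by (rule alt_sum[OF ni])
  also have "(\<Prod>q<p. Abs_fps (fq q)) = P * fps_exp 1 * B"
  proof -
    have "(\<Prod>q<p. Abs_fps (fq q)) = Abs_fps (fq i) * (\<Prod>q\<in>{..<p}-{i}. Abs_fps (fq q))"
      using ip by (simp add: prod.remove)
    also have "(\<Prod>q\<in>{..<p}-{i}. Abs_fps (fq q)) = B"
      unfolding B_def by (intro prod.cong) (auto simp: fq_def)
    also have "Abs_fps (fq i) = P * fps_exp 1" unfolding fq_def P_def using hh_fps[OF x0] by simp
    finally show ?thesis .
  qed
  also have "fps_exp (-1) * (P * fps_exp 1 * B) = P * B"
  proof -
    have "fps_exp (-1) * fps_exp 1 = (1 :: real fps)" using fps_exp_add_mult[of "-1" "1::real"] by simp
    hence "fps_exp (-1) * (P * fps_exp 1 * B) = (fps_exp (-1) * fps_exp 1) * (P * B)" by (simp add: mult_ac)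
    also have "\<dots> = P * B" using \<open>fps_exp (-1) * fps_exp 1 = 1\<close> by simp
    finally show ?thesis .
  qed
  finally have e: "(\<Sum>k. poly (ff m) (real k) * poly (Cf p a n i) (real k) * charlier_w a i k)
     = K * exp x * ((-1)^(n i - 1) * fact (n i - 1) * (P * B) $ (n i - 1))" .
  have pm: "((-1::real)^(n i - 1))^2 = 1" by (simp add: power2_eq_square power_mult_distrib[symmetric])
  have ex: "exp (- x) * exp x = 1" by (simp add: exp_minus)
  have "K * exp x * ((-1)^(n i - 1) * fact (n i - 1) * (P * B) $ (n i - 1))
      = (((-1::real)^(n i - 1))^2 * (exp (- x) * exp x)) * (fact (n i - 1) / fact (n i - 1)) * ((P * B) $ (n i - 1) / Pi_i p a n i)"
    unfolding K_def Kc_def x_def by (simp add: power2_eq_square field_simps)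
  also have "\<dots> = (P * B) $ (n i - 1) / Pi_i p a n i" using pm ex by simp
  finally show ?thesis using e unfolding P_def B_def x_def by simp
qed

lemma exist_moments:
  assumes pos: "\<forall>q<p. a q > 0" and inj: "inj_on a {..<p}" and mN: "m < (\<Sum>q<p. n q)"
  shows "lam p a (Cf p a n) (ff m) = (if m = (\<Sum>q<p. n q) - 1 then 1 else 0)"
proof -
  define B where "B i = (\<Prod>q\<in>{..<p}-{i}. Abs_fps (bq a n i q))" for i
  define P where "P i = fps_of_poly ([:a i,1:]^m)" for i
  define R where "R i = fps_const (1 / Pi_i p a n i) * (P i * B i)" for i
  define V where "V i = (\<Sum>t<n i. monom (R i $ t) t)" for i
  define Ep where "Ep i = (\<Prod>q\<in>{..<p}-{i}. [:a i - a q, 1:]^(n q))" for i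
  have cV: "coeff (V i) j = (if j < n i then R i $ j else 0)" for i j
    unfolding V_def by (simp add: coeff_sum coeff_monom)
  have bV: "\<forall>i<p. bnd (V i) (n i)" by (simp add: bnd_def cV)
  have Pnz: "Pi_i p a n i \<noteq> 0" if ip: "i < p" for i
  proof -
    have "(a i - a q) ^ n q \<noteq> 0" if "q \<in> {..<p}-{i}" for q
    proof -
      have "a i \<noteq> a q" using that inj ip by (auto dest: inj_onD)
      thus ?thesis by simp
    qed
    thus ?thesis unfolding Pi_i_def by simp
  qed
  have REp: "R i * fps_of_poly (Ep i) = P i" if ip: "i < p" for i
  proof -
    have "B i * fps_of_poly (Ep i) = (\<Prod>q\<in>{..<p}-{i}. Abs_fps (bq a n i q) * (fps_const (a i - a q) + fps_X)^(n q))"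
      unfolding B_def Ep_def by (simp add: fps_of_poly_prod fps_of_poly_power fps_of_poly_pCons prod.distrib)
    also have "\<dots> = (\<Prod>q\<in>{..<p}-{i}. fps_const ((a i - a q)^(n q)))"
    proof (intro prod.cong refl)
      fix q assume "q \<in> {..<p}-{i}"
      hence ne: "a q - a i \<noteq> 0" using inj ip by (auto dest: inj_onD)
      have "(1 / (a q - a i)) * (a i - a q) = -1" using ne by (simp add: field_simps)
      thus "Abs_fps (bq a n i q) * (fps_const (a i - a q) + fps_X)^(n q) = fps_const ((a i - a q)^(n q))"
        unfolding bq_def by (rule binv)
    qed
    also have "\<dots> = fps_const (Pi_i p a n i)" unfolding Pi_i_def by (simp add: fps_const_prod)
    finally have BE: "B i * fps_of_poly (Ep i) = fps_const (Pi_i p a n i)" .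
    have "R i * fps_of_poly (Ep i) = fps_const (1 / Pi_i p a n i) * (P i * (B i * fps_of_poly (Ep i)))"
      unfolding R_def by (simp only: mult.assoc)
    also have "\<dots> = fps_const (1 / Pi_i p a n i) * (P i * fps_const (Pi_i p a n i))" by (simp only: BE)
    also have "\<dots> = fps_const (1 / Pi_i p a n i) * fps_const (Pi_i p a n i) * P i"
      by (simp only: ac_simps)
    also have "\<dots> = P i" using Pnz[OF ip] by (simp add: fps_const_mult[symmetric] del: fps_const_mult)
    finally show ?thesis .
  qed
  have cong: "\<forall>i<p. \<forall>k<n i. coeff (V i * Ep i) k = coeff ([:a i, 1:]^m) k"
  proof (intro allI impI)
    fix i k assume ip: "i < p" and kn: "k < n i"
    have "coeff (V i * Ep i) k = (\<Sum>t\<le>k. coeff (V i) t * coeff (Ep i) (k - t))" by (rule coeff_mult)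
    also have "\<dots> = (\<Sum>t\<le>k. R i $ t * fps_of_poly (Ep i) $ (k - t))"
      by (intro sum.cong refl) (use kn in \<open>auto simp: cV\<close>)
    also have "\<dots> = (R i * fps_of_poly (Ep i)) $ k" by (simp add: fps_mult_nth atLeast0AtMost)
    also have "\<dots> = coeff ([:a i, 1:]^m) k" using REp[OF ip] by (simp add: P_def)
    finally show "coeff (V i * Ep i) k = coeff ([:a i, 1:]^m) k" .
  qed
  have res: "(\<Sum>i<p. if n i = 0 then 0 else coeff (V i) (n i - 1)) = (if m = (\<Sum>q<p. n q) - 1 then 1 else 0)"
    using residue_sum[OF inj mN bV] cong unfolding Ep_def by blast
  have "lam p a (Cf p a n) (ff m) = (\<Sum>i<p. if n i = 0 then 0 else coeff (V i) (n i - 1))"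
    unfolding lam_def
  proof (intro sum.cong refl)
    fix i assume "i \<in> {..<p}"
    hence ip: "i < p" by simp
    show "(\<Sum>k. poly (ff m) (real k) * poly (Cf p a n i) (real k) * charlier_w a i k) = (if n i = 0 then 0 else coeff (V i) (n i - 1))"
    proof (cases "n i = 0")
      case True then show ?thesis by (simp add: Cf_zero)
    next
      case False
      hence "n i \<ge> 1" by simp
      from mom_Cf[where p=p and a=a and n=n and i=i and m=m, OF pos inj ip this] show ?thesis using False
        by (simp add: cV R_def P_def B_def)
    qed
  qed
  thus ?thesis using res by simp
qed

lemma ff_to_mon:
  assumes h: "\<forall>m<N. lam p a C (ff m) = (if m = N - 1 then 1 else 0)"
  shows "j < N \<Longrightarrow> lam p a C (monom 1 j) = (if j = N - 1 then 1 else 0)"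
proof (induction j rule: less_induct)
  case (less j)
  have "lam p a C (ff j) = (\<Sum>t\<le>j. coeff (ff j) t * lam p a C (monom 1 t))"
    using lam_lin[of p a C "ff j"] by (simp add: degree_ff)
  also have "\<dots> = (\<Sum>t<j. coeff (ff j) t * lam p a C (monom 1 t)) + lam p a C (monom 1 j)"
    by (simp add: lessThan_Suc_atMost[symmetric] lead_ff)
  also have "(\<Sum>t<j. coeff (ff j) t * lam p a C (monom 1 t)) = 0"
  proof (rule sum.neutral, intro ballI)
    fix t assume "t \<in> {..<j}"
    hence "t < j" by simp
    thus "coeff (ff j) t * lam p a C (monom 1 t) = 0" using less by simp
  qed
  finally show ?case using h less.prems by simp
qed

lemma typeI_lam: "(\<Sum>i<p. \<Sum>k. real k ^ j * poly (C i) (real k) * charlier_w a i k) = lam p a C (monom 1 j)"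
  unfolding lam_def by (simp add: poly_monom)

theorem mainTheorem17:
  fixes p :: nat and a :: "nat \<Rightarrow> real" and n :: "nat \<Rightarrow> nat"
  assumes "\<forall>q<p. a q > 0"
    and "inj_on a {..<p}"
  shows "(\<exists>C. is_typeI_charlier p a n C) \<and>
         (\<forall>C. is_typeI_charlier p a n C \<longrightarrow>
            (\<forall>i<p. n i \<ge> 1 \<longrightarrow> (\<forall>x. poly (C i) x = charlier_formula p a n i x)))"
proof -
  note pos = assms(1) and inj = assms(2)
  define N where "N = (\<Sum>q<p. n q)"
  define C0 where "C0 = Cf p a n"
  have momC0: "\<forall>j<N. lam p a C0 (monom 1 j) = (if j = N - 1 then 1 else 0)"
  proof (intro allI impI)
    fix j assume "j < N"
    moreover have "\<forall>m<N. lam p a C0 (ff m) = (if m = N - 1 then 1 else 0)"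
      using exist_moments[OF pos inj] unfolding N_def C0_def by blast
    ultimately show "lam p a C0 (monom 1 j) = (if j = N - 1 then 1 else 0)"
      using ff_to_mon by blast
  qed
  have typC: "is_typeI_charlier p a n C0"
    unfolding is_typeI_charlier_def typeI_lam
  proof (intro conjI allI impI)
    fix i assume "i < p"
    { assume "n i = 0" thus "C0 i = 0" by (simp add: C0_def Cf_zero) }
    { assume "1 \<le> n i" thus "degree (C0 i) \<le> n i - 1" unfolding C0_def by (rule degree_Cf) }
  next
    fix j assume "j + 2 \<le> (\<Sum>q<p. n q)"
    thus "lam p a C0 (monom 1 j) = 0" using momC0 N_def by auto
  next
    fix j assume "j + 1 = (\<Sum>q<p. n q)"
    thus "lam p a C0 (monom 1 j) = 1" using momC0 N_def by auto
  qed
  have uniq: "\<forall>i<p. n i \<ge> 1 \<longrightarrow> (\<forall>x. poly (C i) x = charlier_formula p a n i x)"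
    if tC: "is_typeI_charlier p a n C" for C
  proof -
    define D where "D i = C i - C0 i" for i
    have momC: "\<forall>j<N. lam p a C (monom 1 j) = (if j = N - 1 then 1 else 0)"
    proof (intro allI impI)
      fix j assume jN: "j < N"
      show "lam p a C (monom 1 j) = (if j = N - 1 then 1 else 0)"
      proof (cases "j = N - 1")
        case True
        hence "j + 1 = (\<Sum>q<p. n q)" using jN N_def by simp
        thus ?thesis using tC True unfolding is_typeI_charlier_def typeI_lam by simp
      next
        case False
        hence "j + 2 \<le> (\<Sum>q<p. n q)" using jN N_def by simp
        thus ?thesis using tC False unfolding is_typeI_charlier_def typeI_lam by simp
      qed
    qed
    have momD: "lam p a D \<pi> = 0" if "degree \<pi> < N" for \<pi>
    proof -
      have "lam p a D \<pi> = (\<Sum>j\<le>degree \<pi>. coeff \<pi> j * lam p a D (monom 1 j))" by (rule lam_lin)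
      also have "\<dots> = 0"
      proof (rule sum.neutral, intro ballI)
        fix j assume "j \<in> {..degree \<pi>}"
        hence "j < N" using that by simp
        thus "coeff \<pi> j * lam p a D (monom 1 j) = 0"
          unfolding D_def lam_diff using momC momC0 by simp
      qed
      finally show ?thesis .
    qed
    have bD: "\<forall>i<p. bnd (D i) (n i)"
    proof (intro allI impI)
      fix i assume ip: "i < p"
      have bC: "bnd (C i) (n i)"
      proof (cases "n i = 0")
        case True
        hence "C i = 0" using tC ip unfolding is_typeI_charlier_def by simp
        thus ?thesis by (simp add: bnd_def)
      next
        case False
        hence "degree (C i) \<le> n i - 1" using tC ip unfolding is_typeI_charlier_def by simp
        thus ?thesis using False by (intro degree_bnd) simp
      qed
      show "bnd (D i) (n i)" using bC bnd_Cf[of p a n i] unfolding D_def C0_def bnd_def by simp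
    qed
    have "\<forall>i<p. D i = 0"
      using uniq_aux[OF pos inj, of n N D] N_def bD momD by blast
    thus ?thesis unfolding D_def C0_def by (simp add: poly_Cf)
  qed
  show ?thesis using typC uniq by blast
qed

end
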